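(* Let $G$ be a fermionic group with $(-1)^F\neq 1$, and let $d\ge1$. Then there is an exact sequence of topological groups \[ 1\to\operatorname{Spin}(d)\to H_d(G)\to G_b\to 1, \] where $G_b:=G/\langle(-1)^F\rangle$.
   Context: A fermionic group is a topological group $G$ together with a central element $(-1)^F$ with $((-1)^F)^2=1$ and a continuous homomorphism $\theta:G\to\mathbb{Z}_2$ with $\theta((-1)^F)=0$. The fermionic tensor product $A\otimes B$ of fermionic groups is the quotient $(A\times B)/\langle((-1)^F_A,(-1)^F_B)\rangle$, with product $(a_1\otimes b_1)(a_2\otimes b_2)=((-1)^F_A)^{\theta(a_2)\theta(b_1)}a_1a_2\otimes b_1b_2$ and grading $\theta(a\otimes b)=\theta(a)+\theta(b)$. The subscript $ev$ denotes the kernel of the grading. $\operatorname{Pin}^+(d)$ is the double cover of $O(d)$ in which lifts of reflections square to $+1$. It is graded by the determinant sign of its image in $O(d)$, so that its even part is $\operatorname{Spin}(d)$, and its fermion parity is $-1$. Finally, $H_d(G):=(\operatorname{Pin}^+(d)\otimes G)_{ev}$. *)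

theory Defs
  imports "HOL-Analysis.Analysis" "HOL-Algebra.Coset"
begin

definition topological_group :: "('a, 'm) monoid_scheme \<Rightarrow> 'a topology \<Rightarrow> bool" where
  "topological_group G T \<longleftrightarrow> group G \<and> topspace T = carrier G
     \<and> continuous_map (prod_topology T T) T (\<lambda>(x, y). x \<otimes>\<^bsub>G\<^esub> y)
     \<and> continuous_map T T (\<lambda>x. inv\<^bsub>G\<^esub> x)"

text \<open>Z_2 is modelled by bool, addition being exclusive or (\<open>\<noteq>\<close>), with the discrete topology.
  A fermionic group is (G, T, c, theta) where c is the fermion parity (-1)^F.\<close>
definition fermionic_group ::
  "('a, 'm) monoid_scheme \<Rightarrow> 'a topology \<Rightarrow> 'a \<Rightarrow> ('a \<Rightarrow> bool) \<Rightarrow> bool" where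
  "fermionic_group G T c \<theta> \<longleftrightarrow> topological_group G T
     \<and> c \<in> carrier G \<and> (\<forall>g \<in> carrier G. c \<otimes>\<^bsub>G\<^esub> g = g \<otimes>\<^bsub>G\<^esub> c)
     \<and> c \<otimes>\<^bsub>G\<^esub> c = \<one>\<^bsub>G\<^esub>
     \<and> (\<forall>x \<in> carrier G. \<forall>y \<in> carrier G. \<theta> (x \<otimes>\<^bsub>G\<^esub> y) = (\<theta> x \<noteq> \<theta> y))
     \<and> continuous_map T (discrete_topology UNIV) \<theta>
     \<and> \<theta> c = False"

definition quotient_topology :: "'a topology \<Rightarrow> ('a \<Rightarrow> 'b) \<Rightarrow> 'b topology" where
  "quotient_topology X f =
     topology (\<lambda>U. U \<subseteq> f ` topspace X \<and> openin X {x \<in> topspace X. f x \<in> U})"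

section \<open>The Clifford algebra Cl_{d,0} (generators square to +1) and Pin+(d)\<close>

text \<open>An element of the Clifford algebra on R^d is a real function on subsets of
  {0..<d} (coefficient of the monomial e_S), vanishing outside Pow {..<d}.\<close>
type_synonym cliff = "nat set \<Rightarrow> real"

definition cl_sign :: "nat set \<Rightarrow> nat set \<Rightarrow> real" where
  "cl_sign S T = (-1) ^ card {(i, j). i \<in> S \<and> j \<in> T \<and> j < i}"

definition cl_mult :: "nat \<Rightarrow> cliff \<Rightarrow> cliff \<Rightarrow> cliff" where
  "cl_mult d x y = (\<lambda>U. \<Sum>S\<in>Pow {..<d}. \<Sum>T\<in>Pow {..<d}.
       if S \<union> T - S \<inter> T = U then cl_sign S T * x S * y T else 0)"

definition cl_one :: cliff where
  "cl_one = (\<lambda>S. if S = {} then 1 else 0)"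

definition cl_vec :: "nat \<Rightarrow> (nat \<Rightarrow> real) \<Rightarrow> cliff" where
  "cl_vec d v = (\<lambda>S. if \<exists>i<d. S = {i} then v (the_elem S) else 0)"

text \<open>Pin+(d): all finite products of unit vectors of R^d inside the Clifford algebra
  (unit vectors square to +1, i.e. lifts of reflections square to +1).\<close>
definition pin_carrier :: "nat \<Rightarrow> cliff set" where
  "pin_carrier d = {foldr (cl_mult d) (map (cl_vec d) vs) cl_one | vs.
       \<forall>v \<in> set vs. (\<Sum>i<d. (v i)\<^sup>2) = 1}"

definition Pin_plus :: "nat \<Rightarrow> cliff monoid" where
  "Pin_plus d = \<lparr>carrier = pin_carrier d, mult = cl_mult d, one = cl_one\<rparr>"

text \<open>Topology: subspace of the finite-dimensional real vector space (product topology
  on functions, which coincides with the Euclidean one on Pow {..<d}-supported functions).\<close>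
definition pin_top :: "nat \<Rightarrow> cliff topology" where
  "pin_top d = top_of_set (pin_carrier d)"

definition pin_fermion :: cliff where
  "pin_fermion = (\<lambda>S. if S = {} then -1 else 0)"

text \<open>Grading of Pin+(d): the determinant sign of its image in O(d), i.e. whether the
  element is a product of an odd number of unit vectors (odd Clifford degree).\<close>
definition pin_grade :: "cliff \<Rightarrow> bool" where
  "pin_grade x = (\<exists>S. x S \<noteq> 0 \<and> odd (card S))"

definition Spin :: "nat \<Rightarrow> cliff monoid" where
  "Spin d = (Pin_plus d)\<lparr>carrier := {x \<in> pin_carrier d. \<not> pin_grade x}\<rparr>"

definition spin_top :: "nat \<Rightarrow> cliff topology" where
  "spin_top d = subtopology (pin_top d) {x \<in> pin_carrier d. \<not> pin_grade x}"

definition ftwist ::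
  "('a, 'm) monoid_scheme \<Rightarrow> 'a \<Rightarrow> ('a \<Rightarrow> bool) \<Rightarrow> ('b, 'n) monoid_scheme \<Rightarrow> ('b \<Rightarrow> bool)
     \<Rightarrow> ('a \<times> 'b) monoid" where
  "ftwist A cA \<theta>A B \<theta>B = \<lparr>carrier = carrier A \<times> carrier B,
     mult = (\<lambda>(a1, b1) (a2, b2).
        ((if \<theta>A a2 \<and> \<theta>B b1 then cA else \<one>\<^bsub>A\<^esub>) \<otimes>\<^bsub>A\<^esub> a1 \<otimes>\<^bsub>A\<^esub> a2, b1 \<otimes>\<^bsub>B\<^esub> b2)),
     one = (\<one>\<^bsub>A\<^esub>, \<one>\<^bsub>B\<^esub>)\<rparr>"

definition fN :: "('a, 'm) monoid_scheme \<Rightarrow> 'a \<Rightarrow> ('b, 'n) monoid_scheme \<Rightarrow> 'b \<Rightarrow> ('a \<times> 'b) set" where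
  "fN A cA B cB = {(\<one>\<^bsub>A\<^esub>, \<one>\<^bsub>B\<^esub>), (cA, cB)}"

definition ftensor ::
  "('a, 'm) monoid_scheme \<Rightarrow> 'a \<Rightarrow> ('a \<Rightarrow> bool) \<Rightarrow> ('b, 'n) monoid_scheme \<Rightarrow> 'b \<Rightarrow> ('b \<Rightarrow> bool)
     \<Rightarrow> ('a \<times> 'b) set monoid" where
  "ftensor A cA \<theta>A B cB \<theta>B = ftwist A cA \<theta>A B \<theta>B Mod fN A cA B cB"

definition ftensor_proj ::
  "('a, 'm) monoid_scheme \<Rightarrow> 'a \<Rightarrow> ('a \<Rightarrow> bool) \<Rightarrow> ('b, 'n) monoid_scheme \<Rightarrow> 'b \<Rightarrow> ('b \<Rightarrow> bool)
     \<Rightarrow> 'a \<times> 'b \<Rightarrow> ('a \<times> 'b) set" where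
  "ftensor_proj A cA \<theta>A B cB \<theta>B p = fN A cA B cB #>\<^bsub>ftwist A cA \<theta>A B \<theta>B\<^esub> p"

definition ftensor_ev_carrier ::
  "('a, 'm) monoid_scheme \<Rightarrow> 'a \<Rightarrow> ('a \<Rightarrow> bool) \<Rightarrow> ('b, 'n) monoid_scheme \<Rightarrow> 'b \<Rightarrow> ('b \<Rightarrow> bool)
     \<Rightarrow> ('a \<times> 'b) set set" where
  "ftensor_ev_carrier A cA \<theta>A B cB \<theta>B =
     {C \<in> carrier (ftensor A cA \<theta>A B cB \<theta>B). \<forall>(a, b) \<in> C. \<theta>A a = \<theta>B b}"

definition ftensor_ev ::
  "('a, 'm) monoid_scheme \<Rightarrow> 'a \<Rightarrow> ('a \<Rightarrow> bool) \<Rightarrow> ('b, 'n) monoid_scheme \<Rightarrow> 'b \<Rightarrow> ('b \<Rightarrow> bool)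
     \<Rightarrow> ('a \<times> 'b) set monoid" where
  "ftensor_ev A cA \<theta>A B cB \<theta>B =
     (ftensor A cA \<theta>A B cB \<theta>B)\<lparr>carrier := ftensor_ev_carrier A cA \<theta>A B cB \<theta>B\<rparr>"

definition ftensor_ev_top ::
  "('a, 'm) monoid_scheme \<Rightarrow> 'a topology \<Rightarrow> 'a \<Rightarrow> ('a \<Rightarrow> bool)
     \<Rightarrow> ('b, 'n) monoid_scheme \<Rightarrow> 'b topology \<Rightarrow> 'b \<Rightarrow> ('b \<Rightarrow> bool)
     \<Rightarrow> ('a \<times> 'b) set topology" where
  "ftensor_ev_top A TA cA \<theta>A B TB cB \<theta>B =
     subtopology (quotient_topology (prod_topology TA TB) (ftensor_proj A cA \<theta>A B cB \<theta>B))
       (ftensor_ev_carrier A cA \<theta>A B cB \<theta>B)"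

definition H_grp :: "nat \<Rightarrow> ('a, 'm) monoid_scheme \<Rightarrow> 'a \<Rightarrow> ('a \<Rightarrow> bool)
     \<Rightarrow> (cliff \<times> 'a) set monoid" where
  "H_grp d G c \<theta> = ftensor_ev (Pin_plus d) pin_fermion pin_grade G c \<theta>"

definition H_top :: "nat \<Rightarrow> ('a, 'm) monoid_scheme \<Rightarrow> 'a topology \<Rightarrow> 'a \<Rightarrow> ('a \<Rightarrow> bool)
     \<Rightarrow> (cliff \<times> 'a) set topology" where
  "H_top d G T c \<theta> = ftensor_ev_top (Pin_plus d) (pin_top d) pin_fermion pin_grade G T c \<theta>"

definition G_b :: "('a, 'm) monoid_scheme \<Rightarrow> 'a \<Rightarrow> 'a set monoid" where
  "G_b G c = G Mod {\<one>\<^bsub>G\<^esub>, c}"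

definition G_b_top :: "('a, 'm) monoid_scheme \<Rightarrow> 'a topology \<Rightarrow> 'a \<Rightarrow> 'a set topology" where
  "G_b_top G T c = quotient_topology T (\<lambda>g. {\<one>\<^bsub>G\<^esub>, c} #>\<^bsub>G\<^esub> g)"

end

theory Submission
  imports Defs
begin


definition supp :: "nat \<Rightarrow> cliff \<Rightarrow> bool" where
  "supp d x \<longleftrightarrow> (\<forall>U. \<not> U \<subseteq> {..<d} \<longrightarrow> x U = 0)"

lemma supp_mult: "supp d (cl_mult d x y)"
  unfolding supp_def cl_mult_def
  by (auto intro!: sum.neutral)

lemma supp_one: "supp d cl_one"
  unfolding supp_def cl_one_def by auto

lemma supp_pin: "x \<in> pin_carrier d \<Longrightarrow> supp d x"
proof -
  assume "x \<in> pin_carrier d"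
  then obtain vs where x: "x = foldr (cl_mult d) (map (cl_vec d) vs) cl_one"
    unfolding pin_carrier_def by auto
  show ?thesis unfolding x by (cases vs) (auto simp: supp_one supp_mult)
qed

lemma symdiff_eq: "(Z \<union> T - Z \<inter> T = U) \<longleftrightarrow> (T = (U - Z) \<union> (Z - U))"
  by blast

lemma cl_mult_single:
  assumes Z: "Z \<subseteq> {..<d}"
    and sg: "\<And>T. cl_sign Z T = 1" and y: "supp d y"
  shows "cl_mult d (\<lambda>S. if S = Z then k else 0) y = (\<lambda>U. k * y ((U - Z) \<union> (Z - U)))"
proof
  fix U
  have "cl_mult d (\<lambda>S. if S = Z then k else 0) y U = (\<Sum>S\<in>Pow {..<d}. if S = Z then (\<Sum>T\<in>Pow {..<d}.
       if Z \<union> T - Z \<inter> T = U then cl_sign Z T * k * y T else 0) else 0)"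
    unfolding cl_mult_def by (rule sum.cong) (auto cong: if_cong)
  also have "\<dots> = (\<Sum>T\<in>Pow {..<d}.
       if Z \<union> T - Z \<inter> T = U then cl_sign Z T * k * y T else 0)"
    using Z by simp
  also have "\<dots> = (\<Sum>T\<in>Pow {..<d}. if T = (U - Z) \<union> (Z - U) then k * y T else 0)"
    by (rule sum.cong) (auto simp: sg symdiff_eq)
  also have "\<dots> = k * y ((U - Z) \<union> (Z - U))"
    using y Z by (auto simp: supp_def)
  finally show "cl_mult d (\<lambda>S. if S = Z then k else 0) y U = k * y ((U - Z) \<union> (Z - U))" .
qed

lemma sign_empty: "cl_sign {} T = 1" by (simp add: cl_sign_def)
lemma sign_zero: "cl_sign {0} T = 1"
proof -
  have E: "{(i, j). i \<in> {0::nat} \<and> j \<in> T \<and> j < i} = {}" by auto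
  show ?thesis unfolding cl_sign_def E by simp
qed

lemma one_mult: "supp d y \<Longrightarrow> cl_mult d cl_one y = y"
  by (simp add: cl_one_def cl_mult_single sign_empty)

lemma fermion_mult: "supp d y \<Longrightarrow> cl_mult d pin_fermion y = - y"
  by (simp add: pin_fermion_def cl_mult_single sign_empty fun_Compl_def)

lemma mult_neg_right: "cl_mult d x (- y) = - cl_mult d x y"
  unfolding cl_mult_def fun_Compl_def by (auto simp: sum_negf[symmetric] intro!: sum.cong)

lemma mult_neg_left: "cl_mult d (- x) y = - cl_mult d x y"
  unfolding cl_mult_def fun_Compl_def by (auto simp: sum_negf[symmetric] intro!: sum.cong)

definition e0 :: "nat \<Rightarrow> real" where "e0 = (\<lambda>i. if i = 0 then 1 else 0)"
definition m0 :: "nat \<Rightarrow> real" where "m0 = (\<lambda>i. if i = 0 then -1 else 0)"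

lemma sq_e0: "(\<lambda>i. (e0 i)\<^sup>2) = (\<lambda>i. if i = 0 then 1 else 0)"
  by (auto simp: e0_def)
lemma sq_m0: "(\<lambda>i. (m0 i)\<^sup>2) = (\<lambda>i. if i = 0 then 1 else 0)"
  by (auto simp: m0_def)

lemma sum_e0: "d \<ge> 1 \<Longrightarrow> (\<Sum>i<d. (e0 i)\<^sup>2) = 1"
proof -
  assume "d \<ge> 1"
  have "(\<Sum>i<d. (e0 i)\<^sup>2) = (\<Sum>i<d. if i = 0 then 1 else 0)"
    by (rule sum.cong) (auto simp: e0_def)
  then show ?thesis using \<open>d \<ge> 1\<close> by simp
qed
lemma sum_m0: "d \<ge> 1 \<Longrightarrow> (\<Sum>i<d. (m0 i)\<^sup>2) = 1"
proof -
  assume "d \<ge> 1"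
  have "(\<Sum>i<d. (m0 i)\<^sup>2) = (\<Sum>i<d. if i = 0 then 1 else 0)"
    by (rule sum.cong) (auto simp: m0_def)
  then show ?thesis using \<open>d \<ge> 1\<close> by simp
qed

lemma vec_e0: "d \<ge> 1 \<Longrightarrow> cl_vec d e0 = (\<lambda>S. if S = {0} then 1 else 0)"
  unfolding cl_vec_def e0_def by (rule ext) auto

lemma vec_m0: "d \<ge> 1 \<Longrightarrow> cl_vec d m0 = (\<lambda>S. if S = {0} then -1 else 0)"
  unfolding cl_vec_def m0_def by (rule ext) auto

lemma e0_mult: "d \<ge> 1 \<Longrightarrow> supp d y \<Longrightarrow> cl_mult d (cl_vec d e0) y = (\<lambda>U. y ((U - {0}) \<union> ({0} - U)))"
  by (simp add: vec_e0 cl_mult_single sign_zero)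

lemma m0_mult: "d \<ge> 1 \<Longrightarrow> supp d y \<Longrightarrow> cl_mult d (cl_vec d m0) y = (\<lambda>U. - y ((U - {0}) \<union> ({0} - U)))"
  by (simp add: vec_m0 cl_mult_single sign_zero)

lemma symdiff_twice: "(((U - {0}) \<union> ({0} - U)) - {0}) \<union> ({0} - ((U - {0}) \<union> ({0} - U))) = (U::nat set)"
  by blast

lemma neg_pin: assumes "d \<ge> 1" "x \<in> pin_carrier d" shows "- x \<in> pin_carrier d"
proof -
  obtain vs where x: "x = foldr (cl_mult d) (map (cl_vec d) vs) cl_one"
    and vs: "\<forall>v \<in> set vs. (\<Sum>i<d. (v i)\<^sup>2) = 1"
    using assms(2) unfolding pin_carrier_def by auto
  have sx: "supp d x" using assms(2) by (rule supp_pin)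
  have "- x = foldr (cl_mult d) (map (cl_vec d) (m0 # e0 # vs)) cl_one"
    using assms(1) sx supp_mult[of d "cl_vec d e0" x]
    by (simp add: x[symmetric] e0_mult m0_mult symdiff_twice fun_Compl_def)
  moreover have "(\<Sum>i<d. (e0 i)\<^sup>2) = 1" "(\<Sum>i<d. (m0 i)\<^sup>2) = 1"
    using assms(1) by (simp_all add: sum_e0 sum_m0)
  ultimately show ?thesis using vs unfolding pin_carrier_def
    by (intro CollectI exI[of _ "m0 # e0 # vs"]) auto
qed

lemma e0_pin: assumes "d \<ge> 1" shows "cl_vec d e0 \<in> pin_carrier d" "pin_grade (cl_vec d e0)"
proof -
  have "cl_vec d e0 = foldr (cl_mult d) (map (cl_vec d) [e0]) cl_one"
  proof -
    have "cl_mult d (cl_vec d e0) cl_one = cl_vec d e0"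
      by (simp add: e0_mult[OF assms supp_one]) (rule ext, auto simp: cl_one_def vec_e0[OF assms])
    then show ?thesis by simp
  qed
  moreover have "(\<Sum>i<d. (e0 i)\<^sup>2) = 1"
    using assms by (simp add: sum_e0)
  ultimately show "cl_vec d e0 \<in> pin_carrier d" unfolding pin_carrier_def
    by (intro CollectI exI[of _ "[e0]"]) auto
  show "pin_grade (cl_vec d e0)" unfolding pin_grade_def using assms
    by (intro exI[of _ "{0}"]) (simp add: vec_e0)
qed

lemma one_pin: "cl_one \<in> pin_carrier d" "\<not> pin_grade cl_one"
  unfolding pin_carrier_def pin_grade_def cl_one_def
  by (auto intro!: exI[of _ "[]"])

lemma grade_neg: "pin_grade (- x) = pin_grade x"
  unfolding pin_grade_def by simp


lemma supp_neg: "supp d x \<Longrightarrow> supp d (- x)"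
  unfolding supp_def by simp

lemma supp_pf: "supp d pin_fermion"
  unfolding supp_def pin_fermion_def by auto

lemma openin_QT:
  "openin (quotient_topology X f) U \<longleftrightarrow> U \<subseteq> f ` topspace X \<and> openin X {x \<in> topspace X. f x \<in> U}"
proof -
  have "istopology (\<lambda>U. U \<subseteq> f ` topspace X \<and> openin X {x \<in> topspace X. f x \<in> U})"
    unfolding istopology_def
  proof (rule conjI; intro allI impI)
    fix S T assume S: "S \<subseteq> f ` topspace X \<and> openin X {x \<in> topspace X. f x \<in> S}"
      and T: "T \<subseteq> f ` topspace X \<and> openin X {x \<in> topspace X. f x \<in> T}"
    have "{x \<in> topspace X. f x \<in> S \<inter> T} = {x \<in> topspace X. f x \<in> S} \<inter> {x \<in> topspace X. f x \<in> T}"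
      by auto
    moreover have "openin X ({x \<in> topspace X. f x \<in> S} \<inter> {x \<in> topspace X. f x \<in> T})"
      using S T by (intro openin_Int) blast+
    ultimately show "S \<inter> T \<subseteq> f ` topspace X \<and> openin X {x \<in> topspace X. f x \<in> S \<inter> T}"
      using S T by (metis inf.coboundedI1)
  next
    fix K assume K: "\<forall>k\<in>K. k \<subseteq> f ` topspace X \<and> openin X {x \<in> topspace X. f x \<in> k}"
    have "{x \<in> topspace X. f x \<in> \<Union>K} = (\<Union>k\<in>K. {x \<in> topspace X. f x \<in> k})"
      by auto
    moreover have "openin X (\<Union>k\<in>K. {x \<in> topspace X. f x \<in> k})"
      using K by (intro openin_Union) blast
    moreover have "\<Union>K \<subseteq> f ` topspace X" using K by blast
    ultimately show "\<Union>K \<subseteq> f ` topspace X \<and> openin X {x \<in> topspace X. f x \<in> \<Union>K}"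
      by simp
  qed
  then have "openin (quotient_topology X f) = (\<lambda>U. U \<subseteq> f ` topspace X \<and> openin X {x \<in> topspace X. f x \<in> U})"
    unfolding quotient_topology_def by (rule topology_inverse')
  then have "openin (quotient_topology X f) U = (\<lambda>U. U \<subseteq> f ` topspace X \<and> openin X {x \<in> topspace X. f x \<in> U}) U"
    by (rule arg_cong[where f="\<lambda>h. h U"])
  then show ?thesis by (simp only:)
qed

lemma topspace_QT: "topspace (quotient_topology X f) = f ` topspace X"
proof
  show "topspace (quotient_topology X f) \<subseteq> f ` topspace X"
  proof
    fix y assume "y \<in> topspace (quotient_topology X f)"
    then obtain U where U: "openin (quotient_topology X f) U" "y \<in> U"
      unfolding topspace_def by blast
    then have "U \<subseteq> f ` topspace X" by (simp add: openin_QT)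
    then show "y \<in> f ` topspace X" using U(2) by (rule subsetD)
  qed
  have e: "{x \<in> topspace X. f x \<in> f ` topspace X} = topspace X" by blast
  have "openin (quotient_topology X f) (f ` topspace X)"
    unfolding openin_QT e by simp
  then show "f ` topspace X \<subseteq> topspace (quotient_topology X f)"
    by (rule openin_subset)
qed

lemma cont_proj: "continuous_map X (quotient_topology X f) f"
  unfolding continuous_map_def topspace_QT
proof (intro conjI allI impI)
  show "f \<in> topspace X \<rightarrow> f ` topspace X" by (rule funcsetI) (rule imageI)
  fix U assume "openin (quotient_topology X f) U"
  then show "openin X {x \<in> topspace X. f x \<in> U}" by (simp add: openin_QT)
qed

lemma cont_from_QT:
  assumes "continuous_map X Y (\<lambda>x. g (f x))"
  shows "continuous_map (quotient_topology X f) Y g"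
  unfolding continuous_map_def topspace_QT
proof (intro conjI allI impI)
  have "(\<lambda>x. g (f x)) ` topspace X \<subseteq> topspace Y"
    using assms by (rule continuous_map_image_subset_topspace)
  then show "g \<in> f ` topspace X \<rightarrow> topspace Y"
    by (intro funcsetI) (auto simp del: image_subset_iff)
  fix V assume V: "openin Y V"
  have e: "{x \<in> topspace X. f x \<in> {q \<in> f ` topspace X. g q \<in> V}} = {x \<in> topspace X. g (f x) \<in> V}"
    by blast
  have "openin X {x \<in> topspace X. g (f x) \<in> V}"
    using assms V by (rule openin_continuous_map_preimage)
  moreover have "{q \<in> f ` topspace X. g q \<in> V} \<subseteq> f ` topspace X" by (rule Collect_subset)
  ultimately show "openin (quotient_topology X f) {q \<in> f ` topspace X. g q \<in> V}"
    unfolding openin_QT e by simp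
qed

lemma coset_formula:
  assumes "group G" "c \<in> carrier G" "\<theta> \<one>\<^bsub>G\<^esub> = False" "\<theta> c = False"
    "supp d a" "g \<in> carrier G"
  shows "ftensor_proj (Pin_plus d) pin_fermion pin_grade G c \<theta> (a, g) = {(a, g), (- a, c \<otimes>\<^bsub>G\<^esub> g)}"
proof -
  interpret group G by fact
  show ?thesis using assms
    by (auto simp: ftensor_proj_def r_coset_def ftwist_def fN_def Pin_plus_def one_mult supp_one
      fermion_mult supp_pf)
qed

lemma snd_set_mult:
  "snd ` (set_mult (ftwist A cA \<theta>A B \<theta>B) X Y) = set_mult B (snd ` X) (snd ` Y)"
  unfolding set_mult_def ftwist_def by (force split: prod.splits)

lemma set_mult_even:
  assumes "group G" "c \<in> carrier G" "c \<otimes>\<^bsub>G\<^esub> c = \<one>\<^bsub>G\<^esub>" "\<theta> \<one>\<^bsub>G\<^esub> = False" "\<theta> c = False"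
    "supp d x" "supp d y" "\<not> pin_grade y"
  shows "set_mult (ftwist (Pin_plus d) pin_fermion pin_grade G \<theta>)
      {(x, \<one>\<^bsub>G\<^esub>), (- x, c)} {(y, \<one>\<^bsub>G\<^esub>), (- y, c)}
    = {(cl_mult d x y, \<one>\<^bsub>G\<^esub>), (- cl_mult d x y, c)}"
proof -
  interpret group G by fact
  show ?thesis using assms
    by (auto simp: set_mult_def ftwist_def Pin_plus_def one_mult supp_neg grade_neg
      mult_neg_left mult_neg_right)
qed


theorem mainTheorem5:
  fixes G :: "'a monoid" and T :: "'a topology" and c :: 'a and \<theta> :: "'a \<Rightarrow> bool"
    and d :: nat
  assumes "fermionic_group G T c \<theta>"
    and "c \<noteq> \<one>\<^bsub>G\<^esub>"
    and "d \<ge> 1"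
  shows "\<exists>i p. i \<in> hom (Spin d) (H_grp d G c \<theta>)
             \<and> continuous_map (spin_top d) (H_top d G T c \<theta>) i
             \<and> inj_on i (carrier (Spin d))
             \<and> p \<in> hom (H_grp d G c \<theta>) (G_b G c)
             \<and> continuous_map (H_top d G T c \<theta>) (G_b_top G T c) p
             \<and> p ` carrier (H_grp d G c \<theta>) = carrier (G_b G c)
             \<and> i ` carrier (Spin d) = kernel (H_grp d G c \<theta>) (G_b G c) p"
proof -
  have grp: "group G" and top: "topspace T = carrier G"
    and cG: "c \<in> carrier G" and cc: "c \<otimes>\<^bsub>G\<^esub> c = \<one>\<^bsub>G\<^esub>"
    and thmul: "\<And>x y. x \<in> carrier G \<Longrightarrow> y \<in> carrier G \<Longrightarrow> \<theta> (x \<otimes>\<^bsub>G\<^esub> y) = (\<theta> x \<noteq> \<theta> y)"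
    and thc: "\<theta> c = False"
    using assms(1) unfolding fermionic_group_def topological_group_def by auto
  interpret group G by (rule grp)
  have th1: "\<theta> \<one>\<^bsub>G\<^esub> = False"
    using thmul[of "\<one>\<^bsub>G\<^esub>" "\<one>\<^bsub>G\<^esub>"] by simp
  have thcg: "\<theta> (c \<otimes>\<^bsub>G\<^esub> g) = \<theta> g" if "g \<in> carrier G" for g
    using thmul[OF cG that] thc by simp
  define W where "W = ftwist (Pin_plus d) pin_fermion pin_grade G \<theta>"
  define N where "N = fN (Pin_plus d) pin_fermion G c"
  define pr where "pr = ftensor_proj (Pin_plus d) pin_fermion pin_grade G c \<theta>"
  define i where "i = (\<lambda>x. pr (x, \<one>\<^bsub>G\<^esub>))"
  define p where "p = (\<lambda>C::(cliff \<times> 'a) set. snd ` C)"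
  have pr_eq: "pr (a, g) = {(a, g), (- a, c \<otimes>\<^bsub>G\<^esub> g)}" if "supp d a" "g \<in> carrier G" for a g
    unfolding pr_def using coset_formula[OF grp cG th1 thc that] .
  have i_eq: "i x = {(x, \<one>\<^bsub>G\<^esub>), (- x, c)}" if "supp d x" for x
    unfolding i_def using pr_eq[OF that one_closed] cG by simp
  have carrH: "C \<in> carrier (H_grp d G c \<theta>) \<longleftrightarrow>
     (\<exists>a g. a \<in> pin_carrier d \<and> g \<in> carrier G \<and> pin_grade a = \<theta> g \<and> C = pr (a, g))" for C
  proof -
    have e1: "carrier (H_grp d G c \<theta>) = {C \<in> rcosets\<^bsub>W\<^esub> N. \<forall>(a, b) \<in> C. pin_grade a = \<theta> b}"
      by (simp add: H_grp_def ftensor_ev_def ftensor_ev_carrier_def ftensor_def FactGroup_def W_def N_def)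
    have e2: "rcosets\<^bsub>W\<^esub> N = pr ` (pin_carrier d \<times> carrier G)"
    proof -
      have cW: "carrier W = pin_carrier d \<times> carrier G"
        by (simp add: W_def ftwist_def Pin_plus_def)
      have "pr x = N #>\<^bsub>W\<^esub> x" for x
        by (simp add: pr_def ftensor_proj_def W_def N_def)
      then show ?thesis unfolding RCOSETS_def cW by auto
    qed
    have e3: "(\<forall>(a', b) \<in> pr (a, g). pin_grade a' = \<theta> b) \<longleftrightarrow> pin_grade a = \<theta> g"
      if "a \<in> pin_carrier d" "g \<in> carrier G" for a g
      using pr_eq[OF supp_pin[OF that(1)] that(2)] thcg[OF that(2)] by (simp add: grade_neg)
    show ?thesis
    proof
      assume "C \<in> carrier (H_grp d G c \<theta>)"
      then obtain a g where "a \<in> pin_carrier d" "g \<in> carrier G" "C = pr (a, g)"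
        and "\<forall>(a', b) \<in> C. pin_grade a' = \<theta> b"
        unfolding e1 e2 by blast
      then show "\<exists>a g. a \<in> pin_carrier d \<and> g \<in> carrier G \<and> pin_grade a = \<theta> g \<and> C = pr (a, g)"
        using e3 by blast
    next
      assume "\<exists>a g. a \<in> pin_carrier d \<and> g \<in> carrier G \<and> pin_grade a = \<theta> g \<and> C = pr (a, g)"
      then obtain a g where "a \<in> pin_carrier d" "g \<in> carrier G" "C = pr (a, g)"
        and "pin_grade a = \<theta> g" by blast
      then show "C \<in> carrier (H_grp d G c \<theta>)"
        unfolding e1 e2 using e3 by blast
    qed
  qed
  have multH: "C1 \<otimes>\<^bsub>H_grp d G c \<theta>\<^esub> C2 = set_mult W C1 C2" for C1 C2
    by (simp add: H_grp_def ftensor_ev_def ftensor_def W_def)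
  have carrS: "carrier (Spin d) = {x \<in> pin_carrier d. \<not> pin_grade x}"
    and multS: "x \<otimes>\<^bsub>Spin d\<^esub> y = cl_mult d x y" for x y
    by (simp_all add: Spin_def Pin_plus_def)
  have rcG: "{\<one>\<^bsub>G\<^esub>, c} #>\<^bsub>G\<^esub> g = {g, c \<otimes>\<^bsub>G\<^esub> g}" if "g \<in> carrier G" for g
    using that by (auto simp: r_coset_def)
  have carrGb: "carrier (G_b G c) = {{g, c \<otimes>\<^bsub>G\<^esub> g} | g. g \<in> carrier G}"
    by (auto simp: G_b_def FactGroup_def RCOSETS_def rcG)
  have oneGb: "\<one>\<^bsub>G_b G c\<^esub> = {\<one>\<^bsub>G\<^esub>, c}"
    by (simp add: G_b_def)
  have multGb: "X \<otimes>\<^bsub>G_b G c\<^esub> Y = set_mult G X Y" for X Y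
    by (simp add: G_b_def)
  have p_pr: "p (pr (a, g)) = {g, c \<otimes>\<^bsub>G\<^esub> g}" if "supp d a" "g \<in> carrier G" for a g
    using pr_eq[OF that] by (simp add: p_def)
  
  have i_carr: "i x \<in> carrier (H_grp d G c \<theta>)" if "x \<in> carrier (Spin d)" for x
    unfolding carrH i_def using that carrS th1 by auto
  have i_hom: "i \<in> hom (Spin d) (H_grp d G c \<theta>)"
  proof (rule homI)
    fix x y assume x: "x \<in> carrier (Spin d)" and y: "y \<in> carrier (Spin d)"
    have sx: "supp d x" and sy: "supp d y" and gy: "\<not> pin_grade y"
      using x y carrS supp_pin by auto
    show "i (x \<otimes>\<^bsub>Spin d\<^esub> y) = i x \<otimes>\<^bsub>H_grp d G c \<theta>\<^esub> i y"
      unfolding multS multH i_eq[OF sx] i_eq[OF sy] i_eq[OF supp_mult] W_def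
      using set_mult_even[OF grp cG cc th1 thc sx sy gy] by simp
  qed (rule i_carr)
  have i_inj: "inj_on i (carrier (Spin d))"
  proof (rule inj_onI)
    fix x y assume x: "x \<in> carrier (Spin d)" and y: "y \<in> carrier (Spin d)" and e: "i x = i y"
    have sx: "supp d x" and sy: "supp d y" using x y carrS supp_pin by auto
    have "(x, \<one>\<^bsub>G\<^esub>) \<in> i y" using e i_eq[OF sx] by (metis insertI1)
    then show "x = y" using i_eq[OF sy] assms(2) by auto
  qed
  
  have p_carr: "p C \<in> carrier (G_b G c)" if "C \<in> carrier (H_grp d G c \<theta>)" for C
    using that unfolding carrH carrGb using p_pr supp_pin by blast
  have p_hom: "p \<in> hom (H_grp d G c \<theta>) (G_b G c)"
  proof (rule homI)
    fix C1 C2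
    show "p (C1 \<otimes>\<^bsub>H_grp d G c \<theta>\<^esub> C2) = p C1 \<otimes>\<^bsub>G_b G c\<^esub> p C2"
      unfolding multH multGb p_def W_def by (rule snd_set_mult)
  qed (rule p_carr)
  have p_surj: "p ` carrier (H_grp d G c \<theta>) = carrier (G_b G c)"
  proof
    show "p ` carrier (H_grp d G c \<theta>) \<subseteq> carrier (G_b G c)" using p_carr by blast
    show "carrier (G_b G c) \<subseteq> p ` carrier (H_grp d G c \<theta>)"
    proof
      fix X assume "X \<in> carrier (G_b G c)"
      then obtain g where g: "g \<in> carrier G" and X: "X = {g, c \<otimes>\<^bsub>G\<^esub> g}"
        unfolding carrGb by auto
      define a where "a = (if \<theta> g then cl_vec d e0 else cl_one)"
      have a: "a \<in> pin_carrier d" "pin_grade a = \<theta> g"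
        unfolding a_def using e0_pin[OF assms(3)] one_pin by auto
      have "pr (a, g) \<in> carrier (H_grp d G c \<theta>)" unfolding carrH using a g by blast
      moreover have "p (pr (a, g)) = X" using p_pr[OF supp_pin[OF a(1)] g] X by simp
      ultimately show "X \<in> p ` carrier (H_grp d G c \<theta>)" by blast
    qed
  qed
  have i_ker: "i ` carrier (Spin d) = kernel (H_grp d G c \<theta>) (G_b G c) p"
  proof
    show "i ` carrier (Spin d) \<subseteq> kernel (H_grp d G c \<theta>) (G_b G c) p"
    proof
      fix C assume "C \<in> i ` carrier (Spin d)"
      then obtain x where x: "x \<in> carrier (Spin d)" and C: "C = i x" by blast
      have sx: "supp d x" using x carrS supp_pin by auto
      show "C \<in> kernel (H_grp d G c \<theta>) (G_b G c) p"
        unfolding kernel_def oneGb using i_carr[OF x] i_eq[OF sx] C by (auto simp: p_def)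
    qed
    show "kernel (H_grp d G c \<theta>) (G_b G c) p \<subseteq> i ` carrier (Spin d)"
    proof
      fix C assume "C \<in> kernel (H_grp d G c \<theta>) (G_b G c) p"
      then have C: "C \<in> carrier (H_grp d G c \<theta>)" and pC: "p C = {\<one>\<^bsub>G\<^esub>, c}"
        unfolding kernel_def oneGb by auto
      obtain a g where a: "a \<in> pin_carrier d" and g: "g \<in> carrier G"
        and ag: "pin_grade a = \<theta> g" and Ce: "C = pr (a, g)"
        using C unfolding carrH by blast
      have sa: "supp d a" using a supp_pin by auto
      have "g \<in> {\<one>\<^bsub>G\<^esub>, c}" using pC p_pr[OF sa g] Ce by auto
      then show "C \<in> i ` carrier (Spin d)"
      proof
        assume "g = \<one>\<^bsub>G\<^esub>"
        then have "C = i a" "a \<in> carrier (Spin d)"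
          using Ce ag th1 a carrS by (auto simp: i_def)
        then show ?thesis by blast
      next
        assume gc: "g \<in> {c}"
        then have "C = {(a, c), (- a, \<one>\<^bsub>G\<^esub>)}" using Ce pr_eq[OF sa g] cc by auto
        also have "\<dots> = i (- a)" using i_eq[OF supp_neg[OF sa]] by auto
        finally have "C = i (- a)" .
        moreover have "- a \<in> carrier (Spin d)"
          using neg_pin[OF assms(3) a] ag gc thc carrS by (auto simp: grade_neg)
        ultimately show ?thesis by blast
      qed
    qed
  qed
  
  have topPin: "topspace (pin_top d) = pin_carrier d"
    by (simp add: pin_top_def)
  have i_cont: "continuous_map (spin_top d) (H_top d G T c \<theta>) i"
  proof -
    have c1: "continuous_map (spin_top d) T (\<lambda>x. \<one>\<^bsub>G\<^esub>)"
      by (rule continuous_map_const[THEN iffD2]) (simp add: top)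
    have c2: "continuous_map (spin_top d) (pin_top d) (\<lambda>x. x)"
      unfolding spin_top_def
      by (rule continuous_map_from_subtopology[OF continuous_map_id[unfolded id_def]])
    have "continuous_map (spin_top d) (prod_topology (pin_top d) T) (\<lambda>x. (x, \<one>\<^bsub>G\<^esub>))"
      by (rule continuous_map_pairedI[OF c2 c1])
    then have "continuous_map (spin_top d)
        (quotient_topology (prod_topology (pin_top d) T) pr) i"
      unfolding i_def using continuous_map_compose[OF _ cont_proj] by (simp add: o_def)
    moreover have "i ` topspace (spin_top d) \<subseteq> ftensor_ev_carrier (Pin_plus d) pin_fermion pin_grade G c \<theta>"
      using i_carr unfolding spin_top_def carrS
      by (auto simp: topPin H_grp_def ftensor_ev_def)
    ultimately show ?thesis
      unfolding H_top_def ftensor_ev_top_def pr_def[symmetric]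
      by (simp add: continuous_map_in_subtopology image_subset_iff_funcset)
  qed
  have p_cont: "continuous_map (H_top d G T c \<theta>) (G_b_top G T c) p"
  proof -
    have "continuous_map (prod_topology (pin_top d) T) (G_b_top G T c) (\<lambda>x. {\<one>\<^bsub>G\<^esub>, c} #>\<^bsub>G\<^esub> snd x)"
      unfolding G_b_top_def
      using continuous_map_compose[OF continuous_map_snd cont_proj] by (simp add: o_def)
    then have "continuous_map (prod_topology (pin_top d) T) (G_b_top G T c) (\<lambda>x. p (pr x))"
      by (rule continuous_map_eq)
         (auto simp: topPin top rcG p_pr supp_pin)
    then have "continuous_map (quotient_topology (prod_topology (pin_top d) T) pr) (G_b_top G T c) p"
      by (rule cont_from_QT)
    then show ?thesis
      unfolding H_top_def ftensor_ev_top_def pr_def[symmetric]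
      by (rule continuous_map_from_subtopology)
  qed
  show ?thesis
    by (intro exI[of _ i] exI[of _ p] conjI i_hom i_cont i_inj p_hom p_cont p_surj i_ker)
qed

end
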